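(* If $\gamma\in N(x_v^{-1})$, then $v^{-1}(\gamma) \in \Phi^- \setminus \Delta^-$.
   Context: Let $G$ be a complex linear reductive algebraic group with Borel subgroup $B$, maximal torus $T\subset B$, Weyl group $W$, root system $\Phi$ with positive roots $\Phi^+$, negative roots $\Phi^-$, simple roots $\Delta$, and negative simple roots $\Delta^-=-\Delta$. For $w\in W$ let $N(w)=\{\gamma\in\Phi^+ : w(\gamma)\in\Phi^-\}$ be its inversion set. Let $S\in\mathfrak{h}$ (the Lie algebra of $T$) be a non-regular semisimple element and $M=Z_G(S)$, assumed to be a standard Levi subgroup with positive roots $\Phi_M^+$, and let ${^M W}=\{v\in W : N(v^{-1})\subseteq \Phi^+\setminus\Phi_M^+\}$. Fix $v\in {^M W}$, let $R(v)=N(v)\cap\Delta$, and let $L=L_v$ be the standard Levi subgroup with simple roots $\Delta_L=R(v)$, Weyl group $W_L$, positive roots $\Phi_L^+$ and negative roots $\Phi_L^-$. Let $w_v$ be the longest element of $W_L$ and write $v=x_vw_v$ with $x_v\in W^L=\{w\in W : N(w)\subseteq\Phi^+\setminus\Phi_L^+\}$ and $\ell(v)=\ell(x_v)+\ell(w_v)$ (this decomposition exists and is unique). *)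

theory Defs
  imports "HOL-Analysis.Analysis"
begin

text \<open>Roots live in a finite-dimensional real inner product space (real form of the dual
  of the Cartan subalgebra).  Reflection in the hyperplane orthogonal to a root.\<close>
definition rrefl :: "'a::euclidean_space \<Rightarrow> 'a \<Rightarrow> 'a" where
  "rrefl \<alpha> x = x - (2 * (x \<bullet> \<alpha>) / (\<alpha> \<bullet> \<alpha>)) *\<^sub>R \<alpha>"

text \<open>Reduced crystallographic root system (not necessarily spanning, as for reductive groups).\<close>
definition root_system :: "'a::euclidean_space set \<Rightarrow> bool" where
  "root_system \<Phi> \<longleftrightarrow> finite \<Phi> \<and> 0 \<notin> \<Phi>
     \<and> (\<forall>\<alpha>\<in>\<Phi>. rrefl \<alpha> ` \<Phi> \<subseteq> \<Phi>)
     \<and> (\<forall>\<alpha>\<in>\<Phi>. \<forall>\<beta>\<in>\<Phi>. 2 * (\<beta> \<bullet> \<alpha>) / (\<alpha> \<bullet> \<alpha>) \<in> \<int>)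
     \<and> (\<forall>\<alpha>\<in>\<Phi>. \<forall>c. c *\<^sub>R \<alpha> \<in> \<Phi> \<longrightarrow> c = 1 \<or> c = -1)"

definition nonneg_comb :: "'a::euclidean_space set \<Rightarrow> 'a \<Rightarrow> bool" where
  "nonneg_comb D \<beta> \<longleftrightarrow> (\<exists>c::'a \<Rightarrow> nat. \<beta> = (\<Sum>\<alpha>\<in>D. real (c \<alpha>) *\<^sub>R \<alpha>))"

definition simple_system :: "'a::euclidean_space set \<Rightarrow> 'a set \<Rightarrow> bool" where
  "simple_system \<Phi> \<Delta> \<longleftrightarrow> \<Delta> \<subseteq> \<Phi> \<and> independent \<Delta>
     \<and> (\<forall>\<beta>\<in>\<Phi>. nonneg_comb \<Delta> \<beta> \<or> nonneg_comb \<Delta> (-\<beta>))"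

definition pos_roots :: "'a::euclidean_space set \<Rightarrow> 'a set \<Rightarrow> 'a set" where
  "pos_roots \<Phi> \<Delta> = {\<beta>\<in>\<Phi>. nonneg_comb \<Delta> \<beta>}"

definition neg_roots :: "'a::euclidean_space set \<Rightarrow> 'a set \<Rightarrow> 'a set" where
  "neg_roots \<Phi> \<Delta> = uminus ` pos_roots \<Phi> \<Delta>"

definition levi_pos_roots :: "'a::euclidean_space set \<Rightarrow> 'a set \<Rightarrow> 'a set \<Rightarrow> 'a set" where
  "levi_pos_roots \<Phi> \<Delta> J = {\<beta>\<in>pos_roots \<Phi> \<Delta>. \<beta> \<in> span J}"

inductive_set refl_group :: "'a::euclidean_space set \<Rightarrow> ('a \<Rightarrow> 'a) set" for R where
  id_in: "id \<in> refl_group R"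
| step: "w \<in> refl_group R \<Longrightarrow> \<alpha> \<in> R \<Longrightarrow> rrefl \<alpha> \<circ> w \<in> refl_group R"

definition inv_set :: "'a::euclidean_space set \<Rightarrow> 'a set \<Rightarrow> ('a \<Rightarrow> 'a) \<Rightarrow> 'a set" where
  "inv_set \<Phi> \<Delta> w = {\<gamma>\<in>pos_roots \<Phi> \<Delta>. w \<gamma> \<in> neg_roots \<Phi> \<Delta>}"

definition wlen :: "'a::euclidean_space set \<Rightarrow> 'a set \<Rightarrow> ('a \<Rightarrow> 'a) \<Rightarrow> nat" where
  "wlen \<Phi> \<Delta> w = card (inv_set \<Phi> \<Delta> w)"

text \<open>Minimal coset representatives: left (for M) and right (for L).\<close>
definition left_min_reps :: "'a::euclidean_space set \<Rightarrow> 'a set \<Rightarrow> 'a set \<Rightarrow> ('a \<Rightarrow> 'a) set" where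
  "left_min_reps \<Phi> \<Delta> J = {v\<in>refl_group \<Phi>.
       inv_set \<Phi> \<Delta> (inv v) \<subseteq> pos_roots \<Phi> \<Delta> - levi_pos_roots \<Phi> \<Delta> J}"

definition right_min_reps :: "'a::euclidean_space set \<Rightarrow> 'a set \<Rightarrow> 'a set \<Rightarrow> ('a \<Rightarrow> 'a) set" where
  "right_min_reps \<Phi> \<Delta> J = {w\<in>refl_group \<Phi>.
       inv_set \<Phi> \<Delta> w \<subseteq> pos_roots \<Phi> \<Delta> - levi_pos_roots \<Phi> \<Delta> J}"

end

theory Submission
  imports Defs
begin

lemma rrefl_invol: "rrefl a (rrefl a x) = x"
proof (cases "a = 0")
  case True then show ?thesis by (simp add: rrefl_def)
next
  case False
  hence aa: "a \<bullet> a \<noteq> 0" by simp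
  have "(rrefl a x) \<bullet> a = - (x \<bullet> a)"
    using aa by (simp add: rrefl_def inner_diff_left algebra_simps)
  thus ?thesis using aa by (simp add: rrefl_def algebra_simps)
qed

lemma rrefl_linear: "linear (rrefl a)"
  unfolding rrefl_def
  by (rule linearI) (auto simp: inner_add_left algebra_simps add_divide_distrib scaleR_add_left
        inner_scaleR_left)

lemma rg_lin_inj: "w \<in> refl_group R \<Longrightarrow> linear w \<and> inj w"
proof (induction rule: refl_group.induct)
  case id_in then show ?case by (simp add: bounded_linear.linear)
next
  case (step w a)
  have "inj (rrefl a)" by (metis injI rrefl_invol)
  then show ?case using step rrefl_linear linear_compose inj_compose by blast
qed

lemma rg_maps: "w \<in> refl_group R \<Longrightarrow> R \<subseteq> \<Phi> \<Longrightarrow> root_system \<Phi> \<Longrightarrow> w ` \<Phi> \<subseteq> \<Phi>"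
proof (induction rule: refl_group.induct)
  case id_in then show ?case by simp
next
  case (step w a)
  then show ?case unfolding root_system_def by (auto simp: image_subset_iff)
qed

lemma rg_span: "w \<in> refl_group R \<Longrightarrow> w x - x \<in> span R"
proof (induction rule: refl_group.induct)
  case id_in then show ?case by (simp add: span_zero)
next
  case (step w a)
  have "rrefl a (w x) - x = (w x - x) - (2 * (w x \<bullet> a) / (a \<bullet> a)) *\<^sub>R a"
    by (simp add: rrefl_def)
  moreover have "(w x - x) - (2 * (w x \<bullet> a) / (a \<bullet> a)) *\<^sub>R a \<in> span R"
    using step by (simp add: span_diff span_scale span_base)
  ultimately show ?case unfolding o_apply by metis
qed

lemma coef_zero:
  fixes D J :: "'a::euclidean_space set"
  assumes fin: "finite D" and ind: "independent D" and JD: "J \<subseteq> D"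
    and sp: "(\<Sum>a\<in>D. c a *\<^sub>R a) \<in> span J" and aD: "a \<in> D" and aJ: "a \<notin> J"
  shows "c a = 0"
proof -
  have fJ: "finite J" using fin JD finite_subset by blast
  obtain u where u: "(\<Sum>a\<in>D. c a *\<^sub>R a) = (\<Sum>v\<in>J. u v *\<^sub>R v)"
    using sp span_finite[OF fJ] by auto
  have jr: "(\<Sum>v\<in>J. u v *\<^sub>R v) = (\<Sum>v\<in>D. (if v \<in> J then u v else 0) *\<^sub>R v)"
  proof -
    have "(\<Sum>v\<in>D. (if v \<in> J then u v else 0) *\<^sub>R v) = (\<Sum>v\<in>D. if v \<in> J then u v *\<^sub>R v else 0)"
      by (intro sum.cong) auto
    also have "\<dots> = (\<Sum>v\<in>D \<inter> J. u v *\<^sub>R v)" using fin by (simp add: sum.inter_restrict)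
    also have "D \<inter> J = J" using JD by blast
    finally show ?thesis by simp
  qed
  hence "(\<Sum>v\<in>D. (c v - (if v \<in> J then u v else 0)) *\<^sub>R v) = 0"
  proof -
    have "(\<Sum>v\<in>D. (c v - (if v \<in> J then u v else 0)) *\<^sub>R v)
        = (\<Sum>v\<in>D. c v *\<^sub>R v) - (\<Sum>v\<in>D. (if v \<in> J then u v else 0) *\<^sub>R v)"
      by (simp only: scaleR_diff_left sum_subtractf)
    thus ?thesis using u jr by simp
  qed
  hence "\<forall>v\<in>D. c v - (if v \<in> J then u v else 0) = 0"
    using ind independent_explicit[of D] by auto
  thus ?thesis using aD aJ by auto
qed

theorem mainTheorem1:
  fixes \<Phi> \<Delta> \<Delta>M :: "'a::euclidean_space set"
    and v xv wv :: "'a \<Rightarrow> 'a"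
    and \<gamma> :: 'a
  assumes rs: "root_system \<Phi>"
    and ss: "simple_system \<Phi> \<Delta>"
    and M_std: "\<Delta>M \<subseteq> \<Delta>"
    and S_nonreg: "\<Delta>M \<noteq> {}"
    and v_in: "v \<in> left_min_reps \<Phi> \<Delta> \<Delta>M"
    and wv_in: "wv \<in> refl_group (inv_set \<Phi> \<Delta> v \<inter> \<Delta>)"
    and wv_longest: "\<forall>u\<in>refl_group (inv_set \<Phi> \<Delta> v \<inter> \<Delta>). wlen \<Phi> \<Delta> u \<le> wlen \<Phi> \<Delta> wv"
    and xv_in: "xv \<in> right_min_reps \<Phi> \<Delta> (inv_set \<Phi> \<Delta> v \<inter> \<Delta>)"
    and decomp: "v = xv \<circ> wv"
    and len: "wlen \<Phi> \<Delta> v = wlen \<Phi> \<Delta> xv + wlen \<Phi> \<Delta> wv"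
    and \<gamma>_in: "\<gamma> \<in> inv_set \<Phi> \<Delta> (inv xv)"
  shows "inv v \<gamma> \<in> neg_roots \<Phi> \<Delta> - uminus ` \<Delta>"
proof -
  define J where "J = inv_set \<Phi> \<Delta> v \<inter> \<Delta>"
  have finP: "finite \<Phi>" using rs unfolding root_system_def by blast
  have DP: "\<Delta> \<subseteq> \<Phi>" and indD: "independent \<Delta>"
    and dich: "\<forall>\<beta>\<in>\<Phi>. nonneg_comb \<Delta> \<beta> \<or> nonneg_comb \<Delta> (-\<beta>)"
    using ss unfolding simple_system_def by blast+
  have finD: "finite \<Delta>" using finP DP finite_subset by blast
  have JD: "J \<subseteq> \<Delta>" unfolding J_def by blast
  have vG: "v \<in> refl_group \<Phi>" using v_in unfolding left_min_reps_def by blast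
  have xG: "xv \<in> refl_group \<Phi>" using xv_in unfolding right_min_reps_def by blast
  have vli: "linear v" "inj v" using rg_lin_inj[OF vG] by auto
  have xli: "linear xv" "inj xv" using rg_lin_inj[OF xG] by auto
  have vP: "v ` \<Phi> = \<Phi>"
    using endo_inj_surj[OF finP rg_maps[OF vG subset_refl rs] inj_on_subset[OF vli(2) subset_UNIV]] .
  have xP: "xv ` \<Phi> = \<Phi>"
    using endo_inj_surj[OF finP rg_maps[OF xG subset_refl rs] inj_on_subset[OF xli(2) subset_UNIV]] .
  have \<gamma>pos: "\<gamma> \<in> pos_roots \<Phi> \<Delta>" and \<gamma>x: "inv xv \<gamma> \<in> neg_roots \<Phi> \<Delta>"
    using \<gamma>_in unfolding inv_set_def by blast+
  have \<gamma>P: "\<gamma> \<in> \<Phi>" using \<gamma>pos unfolding pos_roots_def by blast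
  have "\<gamma> \<in> v ` \<Phi>" using vP \<gamma>P by simp
  then obtain \<delta> where \<delta>P: "\<delta> \<in> \<Phi>" and v\<delta>: "v \<delta> = \<gamma>" by (auto simp: image_iff)
  have \<delta>def: "inv v \<gamma> = \<delta>" using inv_f_f[OF vli(2), of \<delta>] v\<delta> by simp
  have "\<gamma> \<in> xv ` \<Phi>" using xP \<gamma>P by simp
  then obtain \<eta> where x\<eta>: "xv \<eta> = \<gamma>" by (auto simp: image_iff)
  have \<eta>def: "inv xv \<gamma> = \<eta>" using inv_f_f[OF xli(2), of \<eta>] x\<eta> by simp
  obtain \<beta> where \<beta>pos: "\<beta> \<in> pos_roots \<Phi> \<Delta>" and \<eta>\<beta>: "\<eta> = - \<beta>"
    using \<gamma>x unfolding \<eta>def neg_roots_def by blast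
  have "xv \<beta> = - \<gamma>" using x\<eta> \<eta>\<beta> linear_neg[OF xli(1)] by (metis minus_minus)
  moreover have "- \<gamma> \<in> neg_roots \<Phi> \<Delta>" using \<gamma>pos unfolding neg_roots_def by blast
  ultimately have "\<beta> \<in> inv_set \<Phi> \<Delta> xv" using \<beta>pos unfolding inv_set_def by auto
  hence \<beta>J: "\<beta> \<notin> span J"
    using xv_in unfolding right_min_reps_def levi_pos_roots_def J_def by blast
  have w\<delta>: "wv \<delta> = \<eta>" using v\<delta> x\<eta> decomp xli(2) by (auto dest: injD)
  have sJ: "\<delta> + \<beta> \<in> span J"
  proof -
    have "wv \<delta> - \<delta> \<in> span J" using rg_span wv_in J_def by blast
    hence "- (wv \<delta> - \<delta>) \<in> span J" by (rule span_neg)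
    thus ?thesis using w\<delta> \<eta>\<beta> by (simp add: algebra_simps)
  qed
  obtain b where b: "\<beta> = (\<Sum>a\<in>\<Delta>. real (b a) *\<^sub>R a)"
    using \<beta>pos unfolding pos_roots_def nonneg_comb_def by blast
  have \<delta>neg: "\<delta> \<in> neg_roots \<Phi> \<Delta>"
  proof -
    have "\<not> nonneg_comb \<Delta> \<delta>"
    proof
      assume "nonneg_comb \<Delta> \<delta>"
      then obtain c where c: "\<delta> = (\<Sum>a\<in>\<Delta>. real (c a) *\<^sub>R a)" unfolding nonneg_comb_def by blast
      have "\<delta> + \<beta> = (\<Sum>a\<in>\<Delta>. (real (c a) + real (b a)) *\<^sub>R a)"
        using b c by (simp add: scaleR_add_left sum.distrib)
      hence z: "\<forall>a\<in>\<Delta> - J. real (c a) + real (b a) = 0"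
        using coef_zero[OF finD indD JD] sJ by (metis DiffE)
      have "\<beta> = (\<Sum>a\<in>J. real (b a) *\<^sub>R a)"
      proof -
        have "\<beta> = (\<Sum>a\<in>\<Delta>. (if a \<in> J then real (b a) else 0) *\<^sub>R a)"
        proof -
          have zb: "\<forall>a\<in>\<Delta> - J. b a = 0" using z by (metis add_is_0 of_nat_add of_nat_eq_0_iff)
          show ?thesis unfolding b using zb by (intro sum.cong) auto
        qed
        also have "\<dots> = (\<Sum>a\<in>J. real (b a) *\<^sub>R a)"
        proof -
          have "(\<Sum>a\<in>\<Delta>. (if a \<in> J then real (b a) else 0) *\<^sub>R a) = (\<Sum>a\<in>\<Delta>. if a \<in> J then real (b a) *\<^sub>R a else 0)"
            by (intro sum.cong) auto
          also have "\<dots> = (\<Sum>a\<in>\<Delta> \<inter> J. real (b a) *\<^sub>R a)" using finD by (simp add: sum.inter_restrict)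
          also have "\<Delta> \<inter> J = J" using JD by blast
          finally show ?thesis by simp
        qed
        finally show ?thesis .
      qed
      hence "\<beta> \<in> span J" by (simp add: span_sum span_scale span_base)
      thus False using \<beta>J by blast
    qed
    hence "nonneg_comb \<Delta> (-\<delta>)" using dich \<delta>P by blast
    moreover have "-\<delta> \<in> \<Phi>"
    proof -
      have nz: "\<delta> \<noteq> 0" using rs \<delta>P unfolding root_system_def by blast
      hence "\<delta> \<bullet> \<delta> \<noteq> 0" by simp
      hence "rrefl \<delta> \<delta> = - \<delta>" by (simp add: rrefl_def scaleR_2 algebra_simps)
      moreover have "rrefl \<delta> ` \<Phi> \<subseteq> \<Phi>" using rs \<delta>P unfolding root_system_def by blast
      ultimately show ?thesis using \<delta>P by (metis image_subset_iff)
    qed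
    ultimately have "-\<delta> \<in> pos_roots \<Phi> \<Delta>" unfolding pos_roots_def by blast
    thus ?thesis unfolding neg_roots_def by (metis image_eqI minus_minus)
  qed
  moreover have "\<delta> \<notin> uminus ` \<Delta>"
  proof
    assume "\<delta> \<in> uminus ` \<Delta>"
    then obtain a where aD: "a \<in> \<Delta>" and \<delta>a: "\<delta> = - a" by blast
    have "(\<Sum>x\<in>\<Delta>. real (if x = a then 1 else 0) *\<^sub>R x) = (\<Sum>x\<in>\<Delta>. if x = a then x else 0)"
      by (intro sum.cong) auto
    also have "\<dots> = a" using finD aD by simp
    finally have "nonneg_comb \<Delta> a"
      unfolding nonneg_comb_def by (metis (no_types))
    hence apos: "a \<in> pos_roots \<Phi> \<Delta>" using aD DP unfolding pos_roots_def by blast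
    have "v a = - \<gamma>" using v\<delta> \<delta>a linear_neg[OF vli(1)] by (metis minus_minus)
    moreover have "- \<gamma> \<in> neg_roots \<Phi> \<Delta>" using \<gamma>pos unfolding neg_roots_def by blast
    ultimately have "a \<in> J" using apos aD unfolding inv_set_def J_def by auto
    hence "\<delta> \<in> span J" using \<delta>a by (simp add: span_neg span_base)
    hence "(\<delta> + \<beta>) - \<delta> \<in> span J" using sJ span_diff by blast
    thus False using \<beta>J by simp
  qed
  ultimately show ?thesis using \<delta>def by simp
qed

end
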